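(* Let $n$ be an integer and let \[ L(n) = p(n) + \sum_{j\geq 1} (-1)^j\Big( p\big(n-j(3j-2)\big) + p\big(n-j(3j+2)\big)\Big) = p(n) - p(n-1) - p(n-5) + p(n-8) + p(n-16) - p(n-21) - p(n-33) + \cdots. \] For $i\geq 1$ let $t^e_i = \frac{(2i-1)(2i-1+(-1)^i)}{2}$ be the $i$th even triangular number ($0, 6, 10, 28, \dots$) and $t^o_i = \frac{(2i-1)(2i-1-(-1)^i)}{2}$ the $i$th odd triangular number ($1,3,15,21,\dots$). If $n$ is even, then \[ L(n) = \sum_{i\geq 1} p\!\left(\frac{n-3t^e_i}{2}\right), \] and if $n$ is odd, then \[ L(n) = \sum_{i\geq 1} p\!\left(\frac{n-3t^o_i}{2}\right). \]
   Context: $p(m)$ denotes the number of partitions of the integer $m$, with $p(0)=1$ and $p(m)=0$ for $m<0$ (so all sums above are finite). Triangular numbers are the numbers $k(k+1)/2$, $k\geq 0$ (including $0$). *)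

theory Defs
  imports Main "HOL-Library.Multiset"
begin

definition partitions :: "nat \<Rightarrow> nat multiset set" where
  "partitions m = {M. (\<forall>x\<in>#M. 0 < x) \<and> sum_mset M = m}"

definition p :: "int \<Rightarrow> int" where
  "p m = (if m < 0 then 0 else int (card (partitions (nat m))))"

text \<open>L(n) = p(n) + sum_{j>=1} (-1)^j (p(n - j(3j-2)) + p(n - j(3j+2))).
  Terms with j > |n| vanish, so the sum is taken over 1..|n|+1.\<close>
definition L :: "int \<Rightarrow> int" where
  "L n = p n + (\<Sum>j\<in>{1..nat \<bar>n\<bar> + 1}.
      (-1) ^ j * (p (n - int j * (3 * int j - 2)) + p (n - int j * (3 * int j + 2))))"

definition te :: "nat \<Rightarrow> int" where
  "te i = ((2 * int i - 1) * (2 * int i - 1 + (-1) ^ i)) div 2"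

definition to :: "nat \<Rightarrow> int" where
  "to i = ((2 * int i - 1) * (2 * int i - 1 - (-1) ^ i)) div 2"

end

theory Submission
  imports Defs "HOL-Computational_Algebra.Formal_Power_Series"
begin

unbundle fps_syntax


definition A :: "nat \<Rightarrow> nat \<Rightarrow> nat multiset set" where
  "A k m = {M. set_mset M \<subseteq> {1..k} \<and> sum_mset M = m}"

lemma size_le_sum: "set_mset M \<subseteq> {1..k} \<Longrightarrow> size M \<le> sum_mset M"
proof (induction M)
  case empty then show ?case by simp
next
  case (add x M) then show ?case by auto
qed

lemma finite_A: "finite (A k m)"
proof -
  have "A k m \<subseteq> (\<Union>s\<in>{..m}. multisets_of_size {1..k} s)"
  proof
    fix M assume M: "M \<in> A k m"
    then have "M \<in> multisets_of_size {1..k} (size M)" "size M \<le> m"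
      unfolding A_def multisets_of_size_def using size_le_sum by auto
    then show "M \<in> (\<Union>s\<in>{..m}. multisets_of_size {1..k} s)" by auto
  qed
  moreover have "finite (\<Union>s\<in>{..m}. multisets_of_size {1..k} s)" by auto
  ultimately show ?thesis by (rule finite_subset)
qed

lemma A0: "A 0 m = (if m = 0 then {{#}} else {})"
  unfolding A_def by auto

lemma A_split:
  assumes "k \<ge> 1"
  shows "A k m = A (k-1) m \<union> (if k \<le> m then (\<lambda>M. M + {#k#}) ` A k (m - k) else {})"
proof -
  have "M \<in> A (k-1) m \<or> (k \<le> m \<and> M \<in> (\<lambda>M. M + {#k#}) ` A k (m - k))" if "M \<in> A k m" for M
  proof (cases "k \<in># M")
    case True
    then obtain M' where M': "M = M' + {#k#}" by (metis insert_DiffM2)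
    with that show ?thesis unfolding A_def by auto
  next
    case False
    have "set_mset M \<subseteq> {1..k-1}"
    proof
      fix x assume "x \<in># M"
      with that False have "1 \<le> x" "x \<le> k" "x \<noteq> k" unfolding A_def by auto
      then show "x \<in> {1..k-1}" by simp
    qed
    with that show ?thesis unfolding A_def by auto
  qed
  moreover have "A (k-1) m \<subseteq> A k m"
  proof
    fix M assume "M \<in> A (k-1) m"
    moreover have "{1..k-1} \<subseteq> {1..k}" by auto
    ultimately show "M \<in> A k m" unfolding A_def by blast
  qed
  moreover have "(\<lambda>M. M + {#k#}) ` A k (m - k) \<subseteq> A k m" if "k \<le> m"
    unfolding A_def using that assms by auto
  ultimately show ?thesis by (auto split: if_splits)
qed

lemma card_A_split:
  assumes "k \<ge> 1"
  shows "card (A k m) = card (A (k-1) m) + (if k \<le> m then card (A k (m - k)) else 0)"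
proof (cases "k \<le> m")
  case True
  have disj: "A (k-1) m \<inter> (\<lambda>M. M + {#k#}) ` A k (m - k) = {}"
  proof (rule ccontr)
    assume "A (k-1) m \<inter> (\<lambda>M. M + {#k#}) ` A k (m - k) \<noteq> {}"
    then obtain M' where "M' + {#k#} \<in> A (k-1) m" by blast
    then obtain M where "M \<in> A (k-1) m" "k \<in># M" by (intro that[of "M' + {#k#}"]) auto
    then have "k \<in> {1..k-1}" unfolding A_def by blast
    then show False by auto
  qed
  have inj: "inj_on (\<lambda>M. M + {#k#}) (A k (m - k))" by (auto simp: inj_on_def)
  have "card (A k m) = card (A (k-1) m \<union> (\<lambda>M. M + {#k#}) ` A k (m - k))"
    using A_split[OF assms, of m] True by simp
  also have "\<dots> = card (A (k-1) m) + card ((\<lambda>M. M + {#k#}) ` A k (m - k))"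
    by (rule card_Un_disjoint) (use finite_A disj in auto)
  also have "card ((\<lambda>M. M + {#k#}) ` A k (m - k)) = card (A k (m - k))"
    by (rule card_image[OF inj])
  finally show ?thesis using True by simp
next
  case False
  then show ?thesis using A_split[OF assms, of m] by simp
qed

lemma mem_le_sum: "x \<in># (M :: nat multiset) \<Longrightarrow> x \<le> sum_mset M"
proof -
  assume "x \<in># M"
  then obtain M' where "M = add_mset x M'" by (metis mset_add)
  then show ?thesis by simp
qed

lemma partitions_A: "m \<le> k \<Longrightarrow> partitions m = A k m"
proof -
  assume mk: "m \<le> k"
  show ?thesis
  proof (rule set_eqI)
    fix M
    show "M \<in> partitions m \<longleftrightarrow> M \<in> A k m"
    proof
      assume M: "M \<in> partitions m"
      have "set_mset M \<subseteq> {1..k}"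
      proof
        fix x assume x: "x \<in># M"
        then have "0 < x" using M unfolding partitions_def by auto
        moreover have "x \<le> m" using mem_le_sum[OF x] M unfolding partitions_def by auto
        ultimately show "x \<in> {1..k}" using mk by auto
      qed
      then show "M \<in> A k m" using M unfolding partitions_def A_def by auto
    next
      assume M: "M \<in> A k m"
      then have "\<forall>x\<in>#M. 0 < x" unfolding A_def by fastforce
      then show "M \<in> partitions m" using M unfolding partitions_def A_def by auto
    qed
  qed
qed




abbreviation XX :: "int fps" where "XX \<equiv> fps_X"

definition Pk :: "nat \<Rightarrow> int fps" where
  "Pk k = Abs_fps (\<lambda>m. int (card (A k m)))"

lemma Pk0: "Pk 0 = 1"
  by (rule fps_ext) (simp add: Pk_def A0)

lemma Pk_step:
  assumes "k \<ge> 1"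
  shows "Pk k * (1 - XX ^ k) = Pk (k - 1)"
proof (rule fps_ext)
  fix m
  have "(Pk k * (1 - XX ^ k)) $ m = Pk k $ m - (Pk k * XX ^ k) $ m"
    by (simp add: algebra_simps)
  also have "\<dots> = Pk (k - 1) $ m"
    using card_A_split[OF assms, of m]
    by (simp add: fps_X_power_mult_right_nth Pk_def)
  finally show "(Pk k * (1 - XX ^ k)) $ m = Pk (k - 1) $ m" .
qed

definition qp :: "nat \<Rightarrow> nat \<Rightarrow> int fps" where
  "qp a b = (\<Prod>i\<in>{a..b}. (1 - XX ^ i))"

lemma Pk_qp: "Pk N * qp 1 N = 1"
proof (induction N)
  case 0 then show ?case by (simp add: qp_def Pk0)
next
  case (Suc N)
  have "qp 1 (Suc N) = qp 1 N * (1 - XX ^ Suc N)"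
    unfolding qp_def by (simp add: prod.nat_ivl_Suc' mult.commute)
  then have "Pk (Suc N) * qp 1 (Suc N) = (Pk (Suc N) * (1 - XX ^ Suc N)) * qp 1 N"
    by (metis mult.assoc mult.commute)
  also have "\<dots> = Pk N * qp 1 N" using Pk_step[of "Suc N"] by simp
  finally have "Pk (Suc N) * qp 1 (Suc N) = Pk N * qp 1 N" .
  then show ?case using Suc by simp
qed

definition tri :: "nat \<Rightarrow> nat" where "tri k = k * (k + 1) div 2"

lemma tri2: "2 * tri k = k * (k + 1)"
  unfolding tri_def by simp

lemma tri_Suc: "tri (Suc k) = tri k + Suc k"
  using tri2[of k] tri2[of "Suc k"] by simp

definition aa :: "nat \<Rightarrow> nat \<Rightarrow> int fps" where
  "aa m k = (-1) ^ k * XX ^ (m * k + tri k) * qp (k + 1) m"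

definition S :: "nat \<Rightarrow> int fps" where
  "S n = (\<Sum>k\<le>n. aa n k)"

definition bb :: "nat \<Rightarrow> nat \<Rightarrow> int fps" where
  "bb n k = (-1) ^ k * XX ^ (tri k + n * k) * qp k n"

lemma qp_split_right: "a \<le> Suc b \<Longrightarrow> qp a (Suc b) = qp a b * (1 - XX ^ Suc b)"
  unfolding qp_def by (simp add: prod.nat_ivl_Suc' mult.commute)

lemma qp_split_left: "a \<le> b \<Longrightarrow> qp a b = (1 - XX ^ a) * qp (Suc a) b"
  unfolding qp_def by (simp add: prod.atLeast_Suc_atMost)

lemma qp_empty: "b < a \<Longrightarrow> qp a b = 1"
  unfolding qp_def by simp

lemma aa_diff:
  assumes "k \<le> n"
  shows "aa (Suc n) k - aa n k = bb n (Suc k) - bb n k"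
proof -
  define Q where "Q = (-1) ^ k * qp (k + 1) n"
  define e where "e = n * k + tri k"
  have a1: "aa (Suc n) k = Q * XX ^ e * XX ^ k * (1 - XX ^ Suc n)"
    unfolding aa_def Q_def e_def using assms
    by (simp add: qp_split_right power_add algebra_simps)
  have a2: "aa n k = Q * XX ^ e"
    unfolding aa_def Q_def e_def by (simp add: algebra_simps)
  have b1: "bb n (Suc k) = - (Q * XX ^ e * XX ^ k * XX ^ Suc n)"
    unfolding bb_def Q_def e_def by (simp add: tri_Suc power_add algebra_simps)
  have b2: "bb n k = Q * XX ^ e * (1 - XX ^ k)"
    unfolding bb_def Q_def e_def using assms
    by (simp add: qp_split_left algebra_simps)
  show ?thesis unfolding a1 a2 b1 b2 by (simp add: algebra_simps)
qed

lemma bb0: "bb n 0 = 0"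
  unfolding bb_def using qp_split_left[of 0 n] by simp

lemma S_Suc: "S (Suc n) = S n + (-1) ^ Suc n * (XX ^ (Suc n * Suc n + tri (Suc n)) + XX ^ (tri (Suc n) + n * Suc n))"
proof -
  have "S (Suc n) = aa (Suc n) (Suc n) + (\<Sum>k<Suc n. aa (Suc n) k)"
    unfolding S_def by (simp add: lessThan_Suc_atMost[symmetric])
  also have "(\<Sum>k<Suc n. aa (Suc n) k) = (\<Sum>k<Suc n. aa n k) + (\<Sum>k<Suc n. bb n (Suc k) - bb n k)"
  proof -
    have "(\<Sum>k<Suc n. aa (Suc n) k) = (\<Sum>k<Suc n. aa n k + (bb n (Suc k) - bb n k))"
      by (rule sum.cong) (use aa_diff in \<open>auto simp: algebra_simps\<close>)
    then show ?thesis by (simp add: sum.distrib)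
  qed
  also have "(\<Sum>k<Suc n. bb n (Suc k) - bb n k) = bb n (Suc n)"
    by (simp add: sum_lessThan_telescope bb0)
  also have "(\<Sum>k<Suc n. aa n k) = S n"
    unfolding S_def by (simp add: lessThan_Suc_atMost)
  finally show ?thesis
    unfolding aa_def bb_def by (simp add: qp_empty algebra_simps)
qed




definition gf :: "('a \<Rightarrow> nat) \<Rightarrow> ('a \<Rightarrow> int) \<Rightarrow> int fps" where
  "gf w s = Abs_fps (\<lambda>i. \<Sum>j\<in>{j. w j = i}. s j)"

definition ff :: "('a \<Rightarrow> nat) \<Rightarrow> bool" where
  "ff w \<longleftrightarrow> (\<forall>i. finite {j. w j = i})"

lemma ff_pair:
  assumes "ff w1" "ff w2"
  shows "ff (\<lambda>(j,k). w1 j + w2 k)"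
  unfolding ff_def
proof
  fix n
  have "{(j,k). w1 j + w2 k = n} = (\<Union>i\<in>{0..n}. {j. w1 j = i} \<times> {k. w2 k = n - i})"
    by auto
  moreover have "finite (\<Union>i\<in>{0..n}. {j. w1 j = i} \<times> {k. w2 k = n - i})"
    using assms unfolding ff_def by auto
  ultimately show "finite {x. (case x of (j, k) \<Rightarrow> w1 j + w2 k) = n}"
    by (simp add: case_prod_unfold)
qed

lemma gf_mult:
  assumes "ff w1" "ff w2"
  shows "gf w1 s1 * gf w2 s2 = gf (\<lambda>(j,k). w1 j + w2 k) (\<lambda>(j,k). s1 j * s2 k)"
proof (rule fps_ext)
  fix n
  have f1: "finite {j. w1 j = i}" for i using assms unfolding ff_def by auto
  have f2: "finite {j. w2 j = i}" for i using assms unfolding ff_def by auto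
  have "(gf w1 s1 * gf w2 s2) $ n = (\<Sum>i=0..n. (\<Sum>j\<in>{j. w1 j = i}. s1 j) * (\<Sum>k\<in>{k. w2 k = n - i}. s2 k))"
    unfolding gf_def fps_mult_nth by simp
  also have "\<dots> = (\<Sum>i=0..n. \<Sum>x\<in>{j. w1 j = i} \<times> {k. w2 k = n - i}. (\<lambda>(j,k). s1 j * s2 k) x)"
    by (simp add: sum_product sum.cartesian_product)
  also have "\<dots> = (\<Sum>x\<in>(\<Union>i\<in>{0..n}. {j. w1 j = i} \<times> {k. w2 k = n - i}). (\<lambda>(j,k). s1 j * s2 k) x)"
    by (rule sum.UNION_disjoint[symmetric]) (use f1 f2 in auto)
  also have "(\<Union>i\<in>{0..n}. {j. w1 j = i} \<times> {k. w2 k = n - i}) = {x. (\<lambda>(j,k). w1 j + w2 k) x = n}"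
    by auto
  finally show "(gf w1 s1 * gf w2 s2) $ n = gf (\<lambda>(j,k). w1 j + w2 k) (\<lambda>(j,k). s1 j * s2 k) $ n"
    unfolding gf_def by simp
qed

lemma gf_reindex:
  assumes "bij h" "\<And>x. w2 (h x) = w1 x" "\<And>x. s2 (h x) = s1 x"
  shows "gf w1 s1 = gf w2 s2"
proof (rule fps_ext)
  fix n
  have inj: "inj h" using assms(1) bij_is_inj by auto
  have "{y. w2 y = n} = h ` {x. w1 x = n}"
  proof
    show "{y. w2 y = n} \<subseteq> h ` {x. w1 x = n}"
    proof
      fix y assume "y \<in> {y. w2 y = n}"
      moreover obtain x where "y = h x" using assms(1) by (metis bij_pointE)
      ultimately show "y \<in> h ` {x. w1 x = n}" using assms(2) by auto
    qed
    show "h ` {x. w1 x = n} \<subseteq> {y. w2 y = n}" using assms(2) by auto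
  qed
  then have "(\<Sum>y\<in>{y. w2 y = n}. s2 y) = (\<Sum>x\<in>{x. w1 x = n}. s2 (h x))"
    using sum.reindex[of h "{x. w1 x = n}" s2] inj by (simp add: inj_on_def)
  then show "gf w1 s1 $ n = gf w2 s2 $ n" unfolding gf_def using assms(3) by simp
qed

lemma gf_sum_nth:
  assumes "finite J" "{j. w j = i} \<subseteq> J"
  shows "(\<Sum>j\<in>J. of_int (s j) * fps_X ^ (w j)) $ i = gf w s $ i"
proof -
  have "(\<Sum>j\<in>J. of_int (s j) * fps_X ^ (w j)) $ i = (\<Sum>j\<in>J. if w j = i then s j else 0)"
    by (auto simp: fps_sum_nth intro!: sum.cong)
  also have "\<dots> = (\<Sum>j\<in>J \<inter> {j. w j = i}. s j)"
    using assms(1) by (simp add: sum.inter_restrict)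
  also have "J \<inter> {j. w j = i} = {j. w j = i}" using assms(2) by auto
  finally show ?thesis unfolding gf_def by simp
qed

definition dbl :: "int fps \<Rightarrow> int fps" where
  "dbl f = Abs_fps (\<lambda>m. if even m then f $ (m div 2) else 0)"

lemma dbl_gf: "dbl (gf w s) = gf (\<lambda>x. 2 * w x) s"
proof (rule fps_ext)
  fix m
  show "dbl (gf w s) $ m = gf (\<lambda>x. 2 * w x) s $ m"
  proof (cases "even m")
    case True
    then have "{x. 2 * w x = m} = {x. w x = m div 2}" by auto
    then show ?thesis using True unfolding dbl_def gf_def by simp
  next
    case False
    then have "{x. 2 * w x = m} = {}" by auto
    then show ?thesis using False unfolding dbl_def gf_def by simp
  qed
qed

lemma gf_id: "f = gf (\<lambda>i. i) (\<lambda>i. f $ i)"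
  by (rule fps_ext) (simp add: gf_def)

lemma ff_id: "ff (\<lambda>i::nat. i)" unfolding ff_def by simp
lemma ff_2id: "ff (\<lambda>i::nat. 2 * i)"
  unfolding ff_def
proof
  fix i
  have "{j::nat. 2 * j = i} \<subseteq> {..i}" by auto
  then show "finite {j::nat. 2 * j = i}" using finite_subset by blast
qed

lemma dbl_mult: "dbl (f * g) = dbl f * dbl g"
proof -
  have "f * g = gf (\<lambda>(i,j). i + j) (\<lambda>(i,j). f $ i * g $ j)"
    by (subst (1 2) gf_id) (simp add: gf_mult ff_id)
  then have "dbl (f * g) = gf (\<lambda>x. 2 * (\<lambda>(i,j). i + j) x) (\<lambda>(i,j). f $ i * g $ j)"
    by (simp add: dbl_gf)
  also have "\<dots> = gf (\<lambda>(i,j). 2 * i + 2 * j) (\<lambda>(i,j). f $ i * g $ j)"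
    by (simp add: case_prod_unfold algebra_simps)
  also have "\<dots> = gf (\<lambda>i. 2 * i) (\<lambda>i. f $ i) * gf (\<lambda>i. 2 * i) (\<lambda>i. g $ i)"
    by (simp add: gf_mult ff_2id)
  also have "\<dots> = dbl f * dbl g"
    by (subst (3 4) gf_id) (simp add: dbl_gf)
  finally show ?thesis .
qed

lemma dbl_one: "dbl 1 = 1"
  by (rule fps_ext) (auto simp: dbl_def)




definition wE :: "int \<Rightarrow> nat" where "wE l = nat (l * (3 * l - 1) div 2)"
definition sE :: "int \<Rightarrow> int" where "sE l = (-1) ^ nat \<bar>l\<bar>"
definition E :: "int fps" where "E = gf wE sE"

lemma wE_ge: "nat \<bar>l\<bar> \<le> wE l"
proof -
  have "2 * \<bar>l\<bar> \<le> l * (3 * l - 1)"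
  proof (cases "l \<ge> 1")
    case True
    then have "2 \<le> 3 * l - 1" by simp
    then have "l * 2 \<le> l * (3 * l - 1)" using True by (intro mult_left_mono) auto
    then show ?thesis using True by simp
  next
    case False
    show ?thesis
    proof (cases "l = 0")
      case True then show ?thesis by simp
    next
      case F2: False
      with False have "l \<le> -1" by simp
      then have "(-l) * 2 \<le> (-l) * (1 - 3 * l)" by (intro mult_left_mono) auto
      then show ?thesis using \<open>l \<le> -1\<close> by (simp add: algebra_simps)
    qed
  qed
  then have "\<bar>l\<bar> \<le> l * (3 * l - 1) div 2" by linarith
  then show ?thesis unfolding wE_def by simp
qed

lemma ff_wE: "ff wE"
  unfolding ff_def
proof
  fix i
  have "{l. wE l = i} \<subseteq> {-int i..int i}"
  proof
    fix l assume "l \<in> {l. wE l = i}"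
    then have "nat \<bar>l\<bar> \<le> i" using wE_ge[of l] by simp
    then show "l \<in> {-int i..int i}" by auto
  qed
  then show "finite {l. wE l = i}" using finite_subset by blast
qed

lemma wE_pos: "wE (int (Suc n)) = tri (Suc n) + n * Suc n"
proof -
  have t: "2 * int (tri (Suc n)) = (int n + 1) * (int n + 2)"
    using arg_cong[OF tri2[of "Suc n"], of int] by (simp add: algebra_simps)
  have "int (Suc n) * (3 * int (Suc n) - 1) = 2 * int (tri (Suc n) + n * Suc n)"
    using t by (simp add: algebra_simps)
  then show ?thesis unfolding wE_def by (metis nat_int nonzero_mult_div_cancel_left zero_neq_numeral)
qed

lemma wE_neg: "wE (- int (Suc n)) = Suc n * Suc n + tri (Suc n)"
proof -
  have t: "2 * int (tri (Suc n)) = (int n + 1) * (int n + 2)"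
    using arg_cong[OF tri2[of "Suc n"], of int] by (simp add: algebra_simps)
  have "(- int (Suc n)) * (3 * (- int (Suc n)) - 1) = 2 * int (Suc n * Suc n + tri (Suc n))"
    using t by (simp add: algebra_simps)
  then show ?thesis unfolding wE_def by (metis nat_int nonzero_mult_div_cancel_left zero_neq_numeral)
qed

definition Rz :: "nat \<Rightarrow> int fps" where
  "Rz n = (\<Sum>j\<in>{-int n..int n}. of_int (sE j) * fps_X ^ (wE j))"

lemma Rz_Suc: "Rz (Suc n) = Rz n + (-1) ^ Suc n * (XX ^ (Suc n * Suc n + tri (Suc n)) + XX ^ (tri (Suc n) + n * Suc n))"
proof -
  have iv: "{-int (Suc n)..int (Suc n)} = insert (- int (Suc n)) (insert (int (Suc n)) {-int n..int n})"
    by auto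
  have s1: "sE (int (Suc n)) = (-1) ^ Suc n" unfolding sE_def by (simp del: of_nat_Suc)
  have s2: "sE (- int (Suc n)) = (-1) ^ Suc n" unfolding sE_def by (simp del: of_nat_Suc)
  show ?thesis
    unfolding Rz_def iv
    by (simp add: wE_pos wE_neg s1 s2 algebra_simps del: of_nat_Suc)
qed

lemma S_Rz: "S n = Rz n"
proof (induction n)
  case 0
  show ?case by (simp add: S_def aa_def Rz_def qp_def tri_def sE_def wE_def)
next
  case (Suc n)
  then show ?case by (simp add: S_Suc Rz_Suc)
qed

lemma S_nth: "i \<le> n \<Longrightarrow> S n $ i = qp 1 n $ i"
proof -
  assume i: "i \<le> n"
  have "S n = aa n 0 + (\<Sum>k\<in>{1..n}. aa n k)"
    unfolding S_def by (simp add: atMost_atLeast0 sum.atLeast_Suc_atMost)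
  moreover have "(\<Sum>k\<in>{1..n}. aa n k) $ i = 0"
  proof -
    have "aa n k $ i = 0" if "k \<in> {1..n}" for k
    proof -
      from that obtain k' where k': "k = Suc k'" by (cases k) auto
      have "n \<le> n * k" using that by simp
      moreover have "1 \<le> tri k" using k' tri_Suc[of k'] by simp
      ultimately have "i < n * k + tri k" using i by linarith
      moreover have "aa n k = XX ^ (n * k + tri k) * ((-1) ^ k * qp (k + 1) n)"
        unfolding aa_def by (simp add: algebra_simps)
      ultimately show ?thesis by (simp add: fps_X_power_mult_nth)
    qed
    then show ?thesis by (simp add: fps_sum_nth)
  qed
  ultimately show ?thesis by (simp add: aa_def tri_def)
qed

lemma E_nth: "i \<le> n \<Longrightarrow> E $ i = qp 1 n $ i"
proof -
  assume i: "i \<le> n"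
  have "{j. wE j = i} \<subseteq> {-int n..int n}"
  proof
    fix l assume "l \<in> {j. wE j = i}"
    then have "nat \<bar>l\<bar> \<le> n" using wE_ge[of l] i by simp
    then show "l \<in> {-int n..int n}" by auto
  qed
  then have "E $ i = Rz n $ i" unfolding E_def Rz_def by (simp add: gf_sum_nth)
  also have "\<dots> = qp 1 n $ i" using S_nth[OF i] S_Rz by simp
  finally show ?thesis .
qed

definition PP :: "int fps" where "PP = Abs_fps (\<lambda>m. p (int m))"

lemma PP_nth: "m \<le> k \<Longrightarrow> PP $ m = Pk k $ m"
  unfolding PP_def Pk_def p_def using partitions_A by simp

lemma E_PP: "E * PP = 1"
proof (rule fps_ext)
  fix i
  have "(E * PP) $ i = (\<Sum>a=0..i. E $ a * PP $ (i - a))" by (simp add: fps_mult_nth)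
  also have "\<dots> = (\<Sum>a=0..i. qp 1 i $ a * Pk i $ (i - a))"
    by (rule sum.cong) (auto simp: E_nth PP_nth)
  also have "\<dots> = (qp 1 i * Pk i) $ i" by (simp add: fps_mult_nth)
  also have "\<dots> = 1 $ i" using Pk_qp[of i] by (simp add: mult.commute)
  finally show "(E * PP) $ i = 1 $ i" .
qed




definition wT :: "int \<Rightarrow> nat" where "wT j = nat (3 * j * j + 2 * j)"
definition T :: "int fps" where "T = gf wT sE"
definition Ps :: "int fps" where "Ps = gf (\<lambda>a::nat. 3 * tri a) (\<lambda>_. 1)"

lemma ff_int: assumes "\<And>x. nat \<bar>x\<bar> \<le> w x" shows "ff (w :: int \<Rightarrow> nat)"
  unfolding ff_def
proof
  fix i
  have "{l. w l = i} \<subseteq> {-int i..int i}"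
  proof
    fix l assume "l \<in> {l. w l = i}"
    then have "nat \<bar>l\<bar> \<le> i" using assms[of l] by simp
    then show "l \<in> {-int i..int i}" by auto
  qed
  then show "finite {l. w l = i}" using finite_subset by blast
qed

lemma ff_nat: assumes "\<And>x. x \<le> w x" shows "ff (w :: nat \<Rightarrow> nat)"
  unfolding ff_def
proof
  fix i
  have "{l. w l = i} \<subseteq> {..i}" using assms by force
  then show "finite {l. w l = i}" using finite_subset by blast
qed

lemma wT_int: "int (wT j) = 3 * j * j + 2 * j"
proof -
  have "0 \<le> j * (3 * j + 2)"
    by (cases "j \<ge> 0") (auto intro: mult_nonneg_nonneg mult_nonpos_nonpos)
  then show ?thesis unfolding wT_def by (simp add: algebra_simps)
qed

lemma wE_int: "2 * int (wE l) = l * (3 * l - 1)"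
proof -
  have ev: "even (l * (3 * l - 1))" by (cases "even l") auto
  have "0 \<le> l * (3 * l - 1)"
  proof (cases "l \<ge> 1")
    case True then show ?thesis by (auto intro: mult_nonneg_nonneg)
  next
    case False
    then have "l \<le> 0" by simp
    then show ?thesis by (auto intro: mult_nonpos_nonpos)
  qed
  then show ?thesis using ev unfolding wE_def by auto
qed

lemma tri_int: "2 * int (tri a) = int a * (int a + 1)"
  using arg_cong[OF tri2[of a], of int] by (simp add: algebra_simps)

lemma ff_wT: "ff wT"
proof (rule ff_int)
  fix x :: int
  have "\<bar>x\<bar> \<le> 3 * x * x + 2 * x"
  proof (cases "x \<ge> 0")
    case True
    then have "0 \<le> 3 * x * x" by simp
    then show ?thesis using True by simp
  next
    case False
    then have "0 \<le> x * (x + 1)" by (intro mult_nonpos_nonpos) auto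
    then show ?thesis using False by (simp add: algebra_simps)
  qed
  then show "nat \<bar>x\<bar> \<le> wT x" using wT_int[of x] by simp
qed

lemma ff_2wE: "ff (\<lambda>k. 2 * wE k)"
proof (rule ff_int)
  fix x show "nat \<bar>x\<bar> \<le> 2 * wE x" using wE_ge[of x] by simp
qed

lemma ff_3tri: "ff (\<lambda>a::nat. 3 * tri a)"
proof (rule ff_nat)
  fix x
  have "x \<le> tri x" by (induction x) (auto simp: tri_Suc tri_def)
  then show "x \<le> 3 * tri x" by simp
qed

definition hh :: "int \<times> int \<Rightarrow> nat \<times> int" where
  "hh x = (case x of (j, k) \<Rightarrow> (if j - k \<ge> 0 then nat (j - k) else nat (-1 - (j - k)), -(j + k)))"

definition gg :: "nat \<times> int \<Rightarrow> int \<times> int" where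
  "gg y = (case y of (a, l) \<Rightarrow>
     (let m = (if even (int a + l) then int a else -1 - int a) in ((m - l) div 2, (-l - m) div 2)))"

lemma gg_hh: "gg (hh x) = x"
proof (cases x)
  case (Pair j k)
  show ?thesis
  proof (cases "j - k \<ge> 0")
    case True
    have h: "hh x = (nat (j - k), -(j + k))" using True Pair unfolding hh_def by simp
    have i: "int (nat (j - k)) = j - k" using True by simp
    have e: "even (int (nat (j - k)) + -(j + k))" unfolding i by simp
    have m: "(if even (int (nat (j - k)) + -(j + k)) then int (nat (j - k)) else -1 - int (nat (j - k))) = j - k"
      using e i by simp
    have "gg (nat (j - k), -(j + k)) = ((j - k - (- (j + k))) div 2, (- (- (j + k)) - (j - k)) div 2)"
      unfolding gg_def Let_def case_prod_conv m ..
    also have "\<dots> = (j, k)" by simp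
    finally show ?thesis using h Pair by simp
  next
    case False
    have h: "hh x = (nat (-1 - (j - k)), -(j + k))" using False Pair unfolding hh_def by simp
    have i: "int (nat (-1 - (j - k))) = -1 - (j - k)" using False by simp
    have e: "\<not> even (int (nat (-1 - (j - k))) + -(j + k))" unfolding i by simp
    have m: "(if even (int (nat (-1 - (j - k))) + -(j + k)) then int (nat (-1 - (j - k))) else -1 - int (nat (-1 - (j - k)))) = j - k"
      using e i by simp
    have "gg (nat (-1 - (j - k)), -(j + k)) = ((j - k - (- (j + k))) div 2, (- (- (j + k)) - (j - k)) div 2)"
      unfolding gg_def Let_def case_prod_conv m ..
    also have "\<dots> = (j, k)" by simp
    finally show ?thesis using h Pair by simp
  qed
qed

lemma hh_gg: "hh (gg y) = y"
proof (cases y)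
  case (Pair a l)
  show ?thesis
  proof (cases "even (int a + l)")
    case True
    then obtain c where c: "int a - l = 2 * c" by (metis dvd_def even_diff even_add)
    have d: "- l - int a = 2 * (- l - c)" using c by simp
    have g: "gg y = (c, -l - c)" using True Pair c d unfolding gg_def Let_def by simp
    have "c - (-l - c) = int a" using c by simp
    then show ?thesis using g Pair unfolding hh_def by simp
  next
    case False
    then obtain c where c: "-1 - int a - l = 2 * c"
      by (metis dvd_def even_diff even_add odd_one even_minus)
    have d: "- l - (-1 - int a) = 2 * (- l - c)" using c by simp
    have g: "gg y = (c, -l - c)" using False Pair c d unfolding gg_def Let_def by simp
    have "c - (-l - c) = -1 - int a" using c by simp
    then show ?thesis using g Pair unfolding hh_def by simp
  qed
qed

lemma bij_hh: "bij hh"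
  by (rule o_bij[of gg]) (auto simp: fun_eq_iff gg_hh hh_gg)

lemma key: "T * dbl E = Ps * E"
proof -
  have "T * dbl E = gf (\<lambda>(j,k). wT j + 2 * wE k) (\<lambda>(j,k). sE j * sE k)"
    unfolding T_def E_def dbl_gf by (rule gf_mult[OF ff_wT ff_2wE])
  also have "\<dots> = gf (\<lambda>(a,l). 3 * tri a + wE l) (\<lambda>(a,l). 1 * sE l)"
  proof (rule gf_reindex[OF bij_hh])
    fix x :: "int \<times> int"
    obtain j k where x: "x = (j, k)" by (cases x)
    define m where "m = j - k"
    define l where "l = -(j + k)"
    obtain a where a: "fst (hh x) = a" by simp
    have hx: "hh x = (a, l)" using a unfolding hh_def x l_def by simp
    have aa: "int a * (int a + 1) = m * (m + 1)"
      using a unfolding hh_def x m_def by (auto simp: algebra_simps)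
    have "2 * int (3 * tri a + wE l) = 2 * int (wT j + 2 * wE k)"
      using tri_int[of a] wE_int[of l] wE_int[of k] wT_int[of j] aa
      unfolding m_def l_def by (simp add: algebra_simps)
    then show "(\<lambda>(a,l). 3 * tri a + wE l) (hh x) = (\<lambda>(j,k). wT j + 2 * wE k) x"
      using hx x by simp
    have "sE j * sE k = sE l"
    proof -
      have "sE j * sE k = (-1) ^ (nat \<bar>j\<bar> + nat \<bar>k\<bar>)" unfolding sE_def by (simp add: power_add)
      also have "\<dots> = (-1) ^ nat \<bar>l\<bar>"
      proof -
        have "even (int (nat \<bar>j\<bar> + nat \<bar>k\<bar>)) = even (int (nat \<bar>l\<bar>))"
          unfolding l_def by (auto simp: abs_if)
        then have "even (nat \<bar>j\<bar> + nat \<bar>k\<bar>) = even (nat \<bar>l\<bar>)" by simp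
        then show ?thesis by (simp add: minus_one_power_iff)
      qed
      finally show ?thesis unfolding sE_def .
    qed
    then show "(\<lambda>(a,l). 1 * sE l) (hh x) = (\<lambda>(j,k). sE j * sE k) x"
      using hx x by simp
  qed
  also have "\<dots> = Ps * E"
    unfolding Ps_def E_def by (rule gf_mult[OF ff_3tri ff_wE, symmetric])
  finally show ?thesis .
qed

lemma main_fps: "T * PP = Ps * dbl PP"
proof -
  have one: "dbl E * dbl PP = 1" using E_PP by (metis dbl_mult dbl_one)
  have "T * PP = T * PP * (dbl E * dbl PP)" using one by simp
  also have "\<dots> = (T * dbl E) * PP * dbl PP" by (simp add: algebra_simps)
  also have "\<dots> = Ps * (E * PP) * dbl PP" by (simp add: key algebra_simps)
  also have "\<dots> = Ps * dbl PP" using E_PP by simp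
  finally show ?thesis .
qed




lemma gf_conv:
  assumes J: "finite J" "\<And>j. w j \<le> n \<Longrightarrow> j \<in> J"
    and Q: "\<And>m. Q $ m = F (int m)" and F: "\<And>z. z < 0 \<Longrightarrow> F z = 0"
  shows "(gf w s * Q) $ n = (\<Sum>j\<in>J. s j * F (int n - int (w j)))"
proof -
  define S where "S = {j\<in>J. w j \<le> n}"
  have fS: "finite S" using J unfolding S_def by simp
  have "(gf w s * Q) $ n = (\<Sum>a=0..n. (\<Sum>j\<in>{j. w j = a}. s j) * F (int (n - a)))"
    unfolding fps_mult_nth gf_def Q by simp
  also have "\<dots> = (\<Sum>a\<in>{0..n}. \<Sum>j\<in>{x\<in>S. w x = a}. s j * F (int n - int (w j)))"
  proof (rule sum.cong)
    fix a assume a: "a \<in> {0..n}"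
    then have e: "{j. w j = a} = {x\<in>S. w x = a}" unfolding S_def using J by auto
    show "(\<Sum>j\<in>{j. w j = a}. s j) * F (int (n - a)) = (\<Sum>j\<in>{x\<in>S. w x = a}. s j * F (int n - int (w j)))"
      unfolding e sum_distrib_right using a by (intro sum.cong) auto
  qed simp
  also have "\<dots> = (\<Sum>j\<in>S. s j * F (int n - int (w j)))"
    by (rule sum.group) (use fS in \<open>auto simp: S_def\<close>)
  also have "\<dots> = (\<Sum>j\<in>J. s j * F (int n - int (w j)))"
  proof (rule sum.mono_neutral_left)
    show "\<forall>i\<in>J - S. s i * F (int n - int (w i)) = 0"
    proof
      fix i assume "i \<in> J - S"
      then have "int n - int (w i) < 0" unfolding S_def by auto
      then show "s i * F (int n - int (w i)) = 0" using F by simp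
    qed
  qed (use J in \<open>auto simp: S_def\<close>)
  finally show ?thesis .
qed

lemma sym_sum: "(\<Sum>j\<in>{-int K..int K}. f j) = f 0 + (\<Sum>j\<in>{1..K}. f (int j) + f (- int j))"
proof (induction K)
  case 0 then show ?case by simp
next
  case (Suc K)
  have iv: "{-int (Suc K)..int (Suc K)} = insert (- int (Suc K)) (insert (int (Suc K)) {-int K..int K})"
    by auto
  show ?case unfolding iv using Suc by (simp add: algebra_simps del: of_nat_Suc)
qed

lemma pair_sum: "(\<Sum>a<2*(N::nat). (g::nat \<Rightarrow> int) a) = (\<Sum>i\<in>{1..N}. g (2*i-2) + g (2*i-1))"
proof (induction N)
  case 0 then show ?case by simp
next
  case (Suc N)
  have "(\<Sum>a<2*Suc N. g a) = (\<Sum>a<2*N. g a) + g (2*N) + g (2*N+1)"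
    by (simp add: algebra_simps)
  then show ?case using Suc by simp
qed

lemma wT_ge: "nat \<bar>x\<bar> \<le> wT x"
proof -
  have "\<bar>x\<bar> \<le> 3 * x * x + 2 * x"
  proof (cases "x \<ge> 0")
    case True
    then have "0 \<le> 3 * x * x" by simp
    then show ?thesis using True by simp
  next
    case False
    then have "0 \<le> x * (x + 1)" by (intro mult_nonpos_nonpos) auto
    then show ?thesis using False by (simp add: algebra_simps)
  qed
  then show "nat \<bar>x\<bar> \<le> wT x" using wT_int[of x] by simp
qed

lemma p_neg: "z < 0 \<Longrightarrow> p z = 0" unfolding p_def by simp

lemma LHS: "(T * PP) $ n0 = L (int n0)"
proof -
  define M where "M = n0 + 1"
  have "(T * PP) $ n0 = (\<Sum>j\<in>{-int M..int M}. sE j * p (int n0 - int (wT j)))"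
    unfolding T_def
  proof (rule gf_conv)
    fix j assume "wT j \<le> n0"
    then show "j \<in> {-int M..int M}" using wT_ge[of j] unfolding M_def by auto
  qed (auto simp: PP_def p_neg)
  also have "\<dots> = sE 0 * p (int n0 - int (wT 0)) +
     (\<Sum>j\<in>{1..M}. sE (int j) * p (int n0 - int (wT (int j))) + sE (- int j) * p (int n0 - int (wT (- int j))))"
    by (rule sym_sum)
  also have "\<dots> = L (int n0)"
    unfolding L_def M_def
    by (simp add: wT_int sE_def algebra_simps del: of_nat_Suc)
  finally show ?thesis .
qed

definition FF :: "int \<Rightarrow> int" where "FF z = (if even z then p (z div 2) else 0)"

lemma dblPP_nth: "dbl PP $ m = FF (int m)"
  unfolding dbl_def PP_def FF_def by (simp add: zdiv_int)

lemma RHS0: "(Ps * dbl PP) $ n0 = (\<Sum>i\<in>{1..n0+1}. FF (int n0 - 3 * int (tri (2*i-2))) + FF (int n0 - 3 * int (tri (2*i-1))))"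
proof -
  have "(Ps * dbl PP) $ n0 = (\<Sum>a\<in>{..<2*(n0+1)}. 1 * FF (int n0 - int (3 * tri a)))"
    unfolding Ps_def
  proof (rule gf_conv)
    fix a assume "3 * tri a \<le> n0"
    moreover have "a \<le> tri a" by (induction a) (auto simp: tri_Suc tri_def)
    ultimately show "a \<in> {..<2*(n0+1)}" by auto
  qed (auto simp: dblPP_nth FF_def p_neg)
  also have "\<dots> = (\<Sum>i\<in>{1..n0+1}. FF (int n0 - 3 * int (tri (2*i-2))) + FF (int n0 - 3 * int (tri (2*i-1))))"
    by (subst pair_sum) simp
  finally show ?thesis .
qed




lemma t1: "i \<ge> 1 \<Longrightarrow> int (tri (2*i-1)) = (2 * int i - 1) * int i"
proof -
  assume i: "i \<ge> 1"
  have "2 * int (tri (2*i-1)) = int (2*i-1) * (int (2*i-1) + 1)" by (rule tri_int)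
  also have "int (2*i-1) = 2 * int i - 1" using i by simp
  finally show ?thesis by (simp add: algebra_simps)
qed

lemma t2: "i \<ge> 1 \<Longrightarrow> int (tri (2*i-2)) = (int i - 1) * (2 * int i - 1)"
proof -
  assume i: "i \<ge> 1"
  have "2 * int (tri (2*i-2)) = int (2*i-2) * (int (2*i-2) + 1)" by (rule tri_int)
  also have "int (2*i-2) = 2 * int i - 2" using i by simp
  finally show ?thesis by (simp add: algebra_simps)
qed

lemma te_even: "even i \<Longrightarrow> te i = (2 * int i - 1) * int i"
proof -
  assume "even i"
  then have "te i = ((2 * int i - 1) * (2 * int i)) div 2" unfolding te_def by simp
  also have "\<dots> = (2 * int i - 1) * int i" by simp
  finally show ?thesis .
qed

lemma te_odd: "odd i \<Longrightarrow> te i = (int i - 1) * (2 * int i - 1)"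
proof -
  assume a: "odd i"
  have e: "(2 * int i - 1) * (2 * int i - 1 + (-1) ^ i) = 2 * ((int i - 1) * (2 * int i - 1))"
    using a by (simp add: algebra_simps)
  show ?thesis unfolding te_def e by simp
qed

lemma to_even: "even i \<Longrightarrow> to i = (int i - 1) * (2 * int i - 1)"
proof -
  assume a: "even i"
  have e: "(2 * int i - 1) * (2 * int i - 1 - (-1) ^ i) = 2 * ((int i - 1) * (2 * int i - 1))"
    using a by (simp add: algebra_simps)
  show ?thesis unfolding to_def e by simp
qed

lemma to_odd: "odd i \<Longrightarrow> to i = (2 * int i - 1) * int i"
proof -
  assume "odd i"
  then have "to i = ((2 * int i - 1) * (2 * int i)) div 2" unfolding to_def by simp
  also have "\<dots> = (2 * int i - 1) * int i" by simp
  finally show ?thesis .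
qed

lemma pair_eq:
  assumes i: "i \<ge> 1"
  shows "FF (n - 3 * int (tri (2*i-2))) + FF (n - 3 * int (tri (2*i-1))) = FF (n - 3 * te i) + FF (n - 3 * to i)"
proof (cases "even i")
  case True
  then show ?thesis using t1[OF i] t2[OF i] te_even to_even by simp
next
  case False
  then show ?thesis using t1[OF i] t2[OF i] te_odd to_odd by simp
qed

lemma te_par: "even (te i)"
  by (cases "even i") (auto simp: te_even te_odd)

lemma to_par: "odd (to i)"
  by (cases "even i") (auto simp: to_even to_odd)

lemma te_nonneg: "i \<ge> 1 \<Longrightarrow> te i \<ge> 0"
  by (cases "even i") (auto simp: te_even te_odd)

lemma to_nonneg: "i \<ge> 1 \<Longrightarrow> to i \<ge> 0"
  by (cases "even i") (auto simp: to_even to_odd)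

lemma nonneg_case:
  fixes n0 :: nat
  shows "L (int n0) = (\<Sum>i\<in>{1..n0+1}. FF (int n0 - 3 * te i) + FF (int n0 - 3 * to i))"
proof -
  have "L (int n0) = (Ps * dbl PP) $ n0" using LHS[of n0] main_fps by simp
  also have "\<dots> = (\<Sum>i\<in>{1..n0+1}. FF (int n0 - 3 * te i) + FF (int n0 - 3 * to i))"
    unfolding RHS0 by (rule sum.cong[OF refl]) (rule pair_eq, simp)
  finally show ?thesis .
qed

theorem theorem4:
  fixes n :: int
  shows "(even n \<longrightarrow> L n = (\<Sum>i\<in>{1..nat \<bar>n\<bar> + 1}. p ((n - 3 * te i) div 2)))
       \<and> (odd n \<longrightarrow> L n = (\<Sum>i\<in>{1..nat \<bar>n\<bar> + 1}. p ((n - 3 * to i) div 2)))"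
proof (cases "n \<ge> 0")
  case True
  then obtain n0 where n0: "n = int n0" by (metis nonneg_int_cases)
  have L: "L n = (\<Sum>i\<in>{1..nat \<bar>n\<bar> + 1}. FF (n - 3 * te i) + FF (n - 3 * to i))"
    using nonneg_case[of n0] n0 by simp
  show ?thesis
  proof (intro conjI impI)
    assume ev: "even n"
    show "L n = (\<Sum>i\<in>{1..nat \<bar>n\<bar> + 1}. p ((n - 3 * te i) div 2))"
      unfolding L
    proof (rule sum.cong)
      fix i
      have "even (n - 3 * te i)" "odd (n - 3 * to i)" using ev te_par[of i] to_par[of i] by auto
      then show "FF (n - 3 * te i) + FF (n - 3 * to i) = p ((n - 3 * te i) div 2)"
        unfolding FF_def by simp
    qed simp
  next
    assume od: "odd n"
    show "L n = (\<Sum>i\<in>{1..nat \<bar>n\<bar> + 1}. p ((n - 3 * to i) div 2))"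
      unfolding L
    proof (rule sum.cong)
      fix i
      have h1: "odd (n - 3 * te i)" and h2: "even (n - 3 * to i)" using od te_par[of i] to_par[of i] by auto
      have "FF (n - 3 * te i) = 0" unfolding FF_def by (rule if_not_P[OF h1])
      moreover have "FF (n - 3 * to i) = p ((n - 3 * to i) div 2)" unfolding FF_def by (rule if_P[OF h2])
      ultimately show "FF (n - 3 * te i) + FF (n - 3 * to i) = p ((n - 3 * to i) div 2)" by simp
    qed simp
  qed
next
  case False
  have L0: "L n = 0"
  proof -
    have "p n = 0" using False p_neg by simp
    moreover have "(-1) ^ j * (p (n - int j * (3 * int j - 2)) + p (n - int j * (3 * int j + 2))) = 0"
      if "j \<in> {1..nat \<bar>n\<bar> + 1}" for j
    proof -
      from that have j: "int j \<ge> 1" by auto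
      have a1: "int j * (3 * int j - 2) \<ge> 0" using j by auto
      have a2: "int j * (3 * int j + 2) \<ge> 0" using j by auto
      have "n - int j * (3 * int j - 2) < 0" "n - int j * (3 * int j + 2) < 0" using False a1 a2 by linarith+
      then show ?thesis using p_neg by simp
    qed
    ultimately show ?thesis unfolding L_def by simp
  qed
  have "p ((n - 3 * te i) div 2) = 0" "p ((n - 3 * to i) div 2) = 0" if "i \<in> {1..nat \<bar>n\<bar> + 1}" for i
  proof -
    from that have "i \<ge> 1" by simp
    then have "te i \<ge> 0" "to i \<ge> 0" using te_nonneg to_nonneg by auto
    then have "n - 3 * te i < 0" "n - 3 * to i < 0" using False by auto
    then have "(n - 3 * te i) div 2 < 0" "(n - 3 * to i) div 2 < 0" by (simp_all add: pos_imp_zdiv_neg_iff)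
    then show "p ((n - 3 * te i) div 2) = 0" "p ((n - 3 * to i) div 2) = 0" using p_neg by auto
  qed
  then show ?thesis using L0 by simp
qed

end
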